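(* Let $\mathcal{N}=(Q,\Sigma,\Delta,q_0,F)$ be a one-counter net. If Eve wins the letter game on $\mathcal{N}$, then she has a winning strategy in the letter game that depends only on the current configuration and the letter chosen by Adam, i.e. given by a partial function $\sigma:(Q\times\mathbb{N})\times\Sigma\to\Delta$.
   Context: A one-counter net (OCN) is $\mathcal{N}=(Q,\Sigma,\Delta,q_0,F)$ with $Q$ finite, $\Sigma$ finite, $q_0\in Q$, $F\subseteq Q$, $\Delta\subseteq Q\times\Sigma\times\{-1,0,1\}\times Q$; configurations $(q,n)\in Q\times\mathbb{N}$, step $(q,n)\xrightarrow{a,d}(p,n+d)$ if $(q,a,d,p)\in\Delta$ and $n+d\ge0$; runs start at $(q_0,0)$ and are accepting if the last state is in $F$; $\mathcal{L}(\mathcal{N})$ is the set of words with an accepting run. Letter game: positions $(c,w)$, start $((q_0,0),\varepsilon)$; each round Adam picks $a\in\Sigma$, Eve picks a step $c\xrightarrow{a,d}c'$; if Eve has none and $wa$ is a prefix of a word of $\mathcal{L}(\mathcal{N})$ she loses; if $wa\in\mathcal{L}(\mathcal{N})$ but the state of $c'$ is not in $F$, Adam wins; otherwise continue from $(c',wa)$; Eve wins infinite plays. *)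

theory Defs
  imports Main
begin

type_synonym ('q,'a) transition = "'q \<times> 'a \<times> int \<times> 'q"
type_synonym 'q config = "'q \<times> nat"

record ('q,'a) ocn =
  states :: "'q set"
  alphabet :: "'a set"
  delta :: "('q,'a) transition set"
  init :: 'q
  final :: "'q set"

definition wf_ocn :: "('q,'a) ocn \<Rightarrow> bool" where
  "wf_ocn N \<longleftrightarrow> finite (states N) \<and> finite (alphabet N) \<and>
     delta N \<subseteq> states N \<times> alphabet N \<times> {-1, 0, 1} \<times> states N \<and>
     init N \<in> states N \<and> final N \<subseteq> states N"

text \<open>A step (q,n) -a,d-> (p,n+d) using transition t = (q,a,d,p) in Delta;
  the counter value n + d must be nonnegative (it is the natural number m).\<close>
definition ocn_step :: "('q,'a) ocn \<Rightarrow> 'q config \<Rightarrow> 'a \<Rightarrow> ('q,'a) transition \<Rightarrow> 'q config \<Rightarrow> bool" where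
  "ocn_step N c a t c' \<longleftrightarrow> t \<in> delta N \<and>
     (\<exists>d. t = (fst c, a, d, fst c') \<and> int (snd c') = int (snd c) + d)"

inductive ocn_run :: "('q,'a) ocn \<Rightarrow> 'a list \<Rightarrow> 'q config \<Rightarrow> bool" for N where
  run_Nil: "ocn_run N [] (init N, 0)"
| run_snoc: "ocn_run N w c \<Longrightarrow> ocn_step N c a t c' \<Longrightarrow> ocn_run N (w @ [a]) c'"

definition ocn_lang :: "('q,'a) ocn \<Rightarrow> 'a list set" where
  "ocn_lang N = {w. \<exists>c. ocn_run N w c \<and> fst c \<in> final N}"

definition is_prefix_of_lang :: "('q,'a) ocn \<Rightarrow> 'a list \<Rightarrow> bool" where
  "is_prefix_of_lang N w \<longleftrightarrow> (\<exists>v. w @ v \<in> ocn_lang N)"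

text \<open>Since Eve's earlier choices are
  determined by her strategy and the letters, this covers all (history-dependent) strategies.\<close>
type_synonym ('q,'a) strategy = "'a list \<Rightarrow> 'q config \<Rightarrow> 'a \<Rightarrow> ('q,'a) transition option"

inductive game_reach :: "('q,'a) ocn \<Rightarrow> ('q,'a) strategy \<Rightarrow> 'a list \<Rightarrow> 'q config \<Rightarrow> bool"
  for N s where
  reach_Nil: "game_reach N s [] (init N, 0)"
| reach_snoc: "game_reach N s w c \<Longrightarrow> a \<in> alphabet N \<Longrightarrow> s w c a = Some t \<Longrightarrow>
     ocn_step N c a t c' \<Longrightarrow> game_reach N s (w @ [a]) c'"

definition adam_wins_against :: "('q,'a) ocn \<Rightarrow> ('q,'a) strategy \<Rightarrow> bool" where
  "adam_wins_against N s \<longleftrightarrow> (\<exists>w c a. game_reach N s w c \<and> a \<in> alphabet N \<and>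
     ((\<not> (\<exists>t c'. s w c a = Some t \<and> ocn_step N c a t c') \<and> is_prefix_of_lang N (w @ [a])) \<or>
      (\<exists>t c'. s w c a = Some t \<and> ocn_step N c a t c' \<and> w @ [a] \<in> ocn_lang N \<and> fst c' \<notin> final N)))"

definition winning_strategy :: "('q,'a) ocn \<Rightarrow> ('q,'a) strategy \<Rightarrow> bool" where
  "winning_strategy N s \<longleftrightarrow> \<not> adam_wins_against N s"

definition eve_wins_letter_game :: "('q,'a) ocn \<Rightarrow> bool" where
  "eve_wins_letter_game N \<longleftrightarrow> (\<exists>s. winning_strategy N s)"

definition positional :: "('q config \<Rightarrow> 'a \<Rightarrow> ('q,'a) transition option) \<Rightarrow> ('q,'a) strategy" where
  "positional \<sigma> = (\<lambda>w c a. \<sigma> c a)"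

end

theory Submission
  imports Defs
begin

inductive run_from :: "('q,'a) ocn \<Rightarrow> 'q config \<Rightarrow> 'a list \<Rightarrow> 'q config \<Rightarrow> bool" for N where
  rf_Nil: "run_from N c [] c"
| rf_Cons: "ocn_step N c a t c1 \<Longrightarrow> run_from N c1 u c2 \<Longrightarrow> run_from N c (a # u) c2"

lemma run_from_append:
  assumes "run_from N c u c'" shows "ocn_run N w c \<Longrightarrow> ocn_run N (w @ u) c'"
  using assms
proof (induction arbitrary: w rule: run_from.induct)
  case (rf_Nil c) then show ?case by simp
next
  case (rf_Cons c a t c1 u c2)
  have "ocn_run N (w @ [a]) c1" using rf_Cons.prems rf_Cons.hyps(1) by (rule run_snoc)
  from rf_Cons.IH[OF this] show ?case by simp
qed

lemma reach_run: "game_reach N s w c \<Longrightarrow> ocn_run N w c"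
  by (induction rule: game_reach.induct) (auto intro: ocn_run.intros)

lemma run_alpha:
  assumes "wf_ocn N" shows "ocn_run N w c \<Longrightarrow> set w \<subseteq> alphabet N"
proof (induction rule: ocn_run.induct)
  case run_Nil then show ?case by simp
next
  case (run_snoc w c a t c')
  then show ?case using assms unfolding wf_ocn_def ocn_step_def by auto
qed

lemma run_Nil_inv: "ocn_run N [] c \<Longrightarrow> c = (init N, 0)"
  by (cases rule: ocn_run.cases) auto

lemma lemB:
  assumes wf: "wf_ocn N" and win: "winning_strategy N s"
  shows "game_reach N s w c \<Longrightarrow> w @ u \<in> ocn_lang N \<Longrightarrow> \<exists>c'. run_from N c u c' \<and> fst c' \<in> final N"
proof (induction u arbitrary: w c)
  case Nil
  from Nil.prems(1) show ?case
  proof (cases rule: game_reach.cases)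
    case reach_Nil
    from Nil.prems(2) obtain cf where "ocn_run N [] cf" "fst cf \<in> final N"
      unfolding ocn_lang_def using reach_Nil by auto
    then show ?thesis using reach_Nil run_Nil_inv[of N cf] by (auto intro: rf_Nil)
  next
    case (reach_snoc w0 c0 a t)
    have "fst c \<in> final N"
    proof (rule ccontr)
      assume "fst c \<notin> final N"
      then have "adam_wins_against N s"
        unfolding adam_wins_against_def using reach_snoc Nil.prems(2)
        by (simp only: append_Nil2) blast
      then show False using win unfolding winning_strategy_def by blast
    qed
    then show ?thesis by (blast intro: rf_Nil)
  qed
next
  case (Cons a u)
  from Cons.prems(2) obtain cf where "ocn_run N (w @ a # u) cf" unfolding ocn_lang_def by auto
  from run_alpha[OF wf this] have a: "a \<in> alphabet N" by auto
  have pre: "is_prefix_of_lang N (w @ [a])" unfolding is_prefix_of_lang_def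
    using Cons.prems(2) by (rule_tac x=u in exI) simp
  from win Cons.prems(1) a pre obtain t c1 where st: "s w c a = Some t" "ocn_step N c a t c1"
    unfolding winning_strategy_def adam_wins_against_def by blast
  have r: "game_reach N s (w @ [a]) c1" using Cons.prems(1) a st by (rule reach_snoc)
  from Cons.IH[OF r] Cons.prems(2) obtain c' where "run_from N c1 u c'" "fst c' \<in> final N" by auto
  then show ?case using st(2) by (blast intro: rf_Cons)
qed

lemma lemA:
  assumes wf: "wf_ocn N" and win: "winning_strategy N s"
    and "game_reach N s w1 c" "game_reach N s w2 c" "w1 @ u \<in> ocn_lang N"
  shows "w2 @ u \<in> ocn_lang N"
proof -
  from lemB[OF wf win assms(3,5)] obtain c' where "run_from N c u c'" "fst c' \<in> final N" by auto
  moreover have "ocn_run N w2 c" using assms(4) by (rule reach_run)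
  ultimately show ?thesis unfolding ocn_lang_def using run_from_append by blast
qed

theorem proposition2:
  fixes N :: "('q,'a) ocn"
  assumes "wf_ocn N"
    and "eve_wins_letter_game N"
  shows "\<exists>\<sigma> :: 'q config \<Rightarrow> 'a \<Rightarrow> ('q,'a) transition option.
           (\<forall>c a t. \<sigma> c a = Some t \<longrightarrow> t \<in> delta N) \<and>
           winning_strategy N (positional \<sigma>)"
proof -
  note wf = assms(1)
  from assms(2) obtain s where win: "winning_strategy N s" unfolding eve_wins_letter_game_def by auto
  define W where "W c = (SOME w. game_reach N s w c)" for c
  define \<sigma> where "\<sigma> c a = (if \<exists>t c'. s (W c) c a = Some t \<and> ocn_step N c a t c' then s (W c) c a else None)" for c a
  have sd: "\<sigma> c a = Some t \<Longrightarrow> t \<in> delta N \<and> s (W c) c a = Some t" for c a t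
    unfolding \<sigma>_def ocn_step_def by (auto split: if_splits)
  have WD: "game_reach N s w c \<Longrightarrow> game_reach N s (W c) c" for w c
    unfolding W_def by (rule someI)
  have inv: "game_reach N (positional \<sigma>) w c \<Longrightarrow>
     game_reach N s (W c) c \<and> (\<forall>u. w @ u \<in> ocn_lang N \<longleftrightarrow> W c @ u \<in> ocn_lang N)" for w c
  proof (induction rule: game_reach.induct)
    case reach_Nil
    have g: "game_reach N s [] (init N, 0)" by (rule game_reach.reach_Nil)
    with WD have g2: "game_reach N s (W (init N, 0)) (init N, 0)" .
    have "\<forall>u. [] @ u \<in> ocn_lang N \<longleftrightarrow> W (init N, 0) @ u \<in> ocn_lang N"
      using lemA[OF wf win g g2] lemA[OF wf win g2 g] by blast
    then show ?case using g2 by blast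
  next
    case (reach_snoc w c a t c')
    from reach_snoc.hyps(3) have st: "s (W c) c a = Some t" using sd unfolding positional_def by auto
    have g: "game_reach N s (W c @ [a]) c'"
      using reach_snoc.IH reach_snoc.hyps(2) st reach_snoc.hyps(4) by (auto intro: game_reach.reach_snoc)
    with WD have g2: "game_reach N s (W c') c'" .
    have "\<forall>u. (w @ [a]) @ u \<in> ocn_lang N \<longleftrightarrow> W c' @ u \<in> ocn_lang N"
    proof
      fix u
      have "(w @ [a]) @ u \<in> ocn_lang N \<longleftrightarrow> W c @ (a # u) \<in> ocn_lang N"
        using reach_snoc.IH by simp
      also have "\<dots> \<longleftrightarrow> (W c @ [a]) @ u \<in> ocn_lang N" by simp
      also have "\<dots> \<longleftrightarrow> W c' @ u \<in> ocn_lang N"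
        using lemA[OF wf win g g2] lemA[OF wf win g2 g] by blast
      finally show "(w @ [a]) @ u \<in> ocn_lang N \<longleftrightarrow> W c' @ u \<in> ocn_lang N" .
    qed
    then show ?case using g2 by blast
  qed
  have "winning_strategy N (positional \<sigma>)"
    unfolding winning_strategy_def
  proof (rule notI)
    assume "adam_wins_against N (positional \<sigma>)"
    then obtain w c a where r: "game_reach N (positional \<sigma>) w c" and a: "a \<in> alphabet N"
      and dj: "(\<not> (\<exists>t c'. positional \<sigma> w c a = Some t \<and> ocn_step N c a t c') \<and> is_prefix_of_lang N (w @ [a])) \<or>
      (\<exists>t c'. positional \<sigma> w c a = Some t \<and> ocn_step N c a t c' \<and> w @ [a] \<in> ocn_lang N \<and> fst c' \<notin> final N)"
      unfolding adam_wins_against_def by blast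
    show False
    proof (cases "\<not> (\<exists>t c'. positional \<sigma> w c a = Some t \<and> ocn_step N c a t c') \<and> is_prefix_of_lang N (w @ [a])")
    case True
    then have no: "\<not> (\<exists>t c'. positional \<sigma> w c a = Some t \<and> ocn_step N c a t c')"
      and pre: "is_prefix_of_lang N (w @ [a])" by auto
    from inv[OF r] pre have g: "game_reach N s (W c) c" and "is_prefix_of_lang N (W c @ [a])"
      unfolding is_prefix_of_lang_def by auto
    with win a obtain t c' where "s (W c) c a = Some t" "ocn_step N c a t c'"
      unfolding winning_strategy_def adam_wins_against_def by blast
    then have "\<exists>t c'. s (W c) c a = Some t \<and> ocn_step N c a t c'" by blast
    then have "\<sigma> c a = Some t" unfolding \<sigma>_def using \<open>s (W c) c a = Some t\<close> by simp
    with no \<open>ocn_step N c a t c'\<close> show False unfolding positional_def by blast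
  next
    case False
    with dj have ex: "\<exists>t c'. positional \<sigma> w c a = Some t \<and> ocn_step N c a t c' \<and> w @ [a] \<in> ocn_lang N \<and> fst c' \<notin> final N" by blast
    then obtain t c' where h: "\<sigma> c a = Some t" "ocn_step N c a t c'" "w @ [a] \<in> ocn_lang N" "fst c' \<notin> final N"
      unfolding positional_def by auto
    from inv[OF r] h(3) have g: "game_reach N s (W c) c" and "W c @ [a] \<in> ocn_lang N" by auto
    with win a h sd show False
      unfolding winning_strategy_def adam_wins_against_def by blast
    qed
  qed
  moreover have "\<forall>c a t. \<sigma> c a = Some t \<longrightarrow> t \<in> delta N" using sd by blast
  ultimately show ?thesis by blast
qed

end
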